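(* Let $\Lambda>0$ and let $a_0,b_0>0$ be constants. Put $\theta(x^8)=\sqrt{2\Lambda}\,x^8$ and let $U\subset\mathbb{R}^8$ be the open set of points $(x^1,\dots,x^8)$ with $\sin\theta(x^8)\neq 0$. For either choice of the sign $\epsilon\in\{+1,-1\}$ and either choice of the sign $\sigma\in\{+1,-1\}$, define on $U$ $$a(x^4,x^8)=a_0\,e^{\epsilon\frac13\sqrt{\Lambda/2}\,x^4}\,\big(\sin^2\theta(x^8)\big)^{1/12},\qquad b(x^4,x^8)=b_0\,e^{-\epsilon\frac13\sqrt{\Lambda/2}\,x^4}\,\big(\sin^2\theta(x^8)\big)^{1/12},$$ $$\varphi(x^4,x^8)=\sigma\,\tfrac12\sqrt{\tfrac56}\,\ln\!\Big[\tan^2\!\big(\tfrac12\theta(x^8)\big)\Big].$$ Then the metric $$ds^2=a^2\big[(dx^1)^2+(dx^2)^2+(dx^3)^2\big]-(dx^4)^2-b^2\big[(dx^5)^2+(dx^6)^2+(dx^7)^2\big]+(dx^8)^2$$ together with the scalar field $\varphi$ satisfies on $U$ the coupled Einstein–massless-scalar field equations $$G_{\mu\nu}+\Lambda g_{\mu\nu}=T_{\mu\nu},\qquad T_{\mu\nu}=\partial_\mu\varphi\,\partial_\nu\varphi-\tfrac12 g_{\mu\nu}\,g^{\alpha\beta}\partial_\alpha\varphi\,\partial_\beta\varphi,\qquad \frac{1}{\sqrt{|\det g|}}\,\partial_\mu\!\Big(\sqrt{|\det g|}\,g^{\mu\nu}\partial_\nu\varphi\Big)=0 .$$ Moreover,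 for this solution the relative expansion rate $\ell=\tfrac12\,\partial_{x^4}\ln(b/a)$ equals the constant $-\epsilon\,\tfrac13\sqrt{\Lambda/2}$, and the functions $a,b,\varphi$ are periodic in $x^8$ with common minimal positive period $\pi\sqrt{2/\Lambda}$ (so this common period equals $2\pi$ exactly when $\Lambda=\tfrac12$).
   Context: Coordinates $(x^1,\dots,x^8)$ on (an open subset of) $\mathbb{R}^8$; the metric has signature $(4,4)$, with $x^1,x^2,x^3,x^8$ spacelike and $x^4,\dots,x^7$ timelike. $G_{\mu\nu}=R_{\mu\nu}-\tfrac12 R\,g_{\mu\nu}$ is the Einstein tensor of the Levi-Civita connection of $g$, with the Landau–Lifshitz (MTW "spacelike") sign conventions for the Riemann and Ricci tensors. Units are chosen with $8\pi\mathbb{G}=1$. $\Lambda$ is the cosmological constant. The scalar field $\varphi$ is real, massless, minimally coupled, with zero potential (action density $\sqrt{|\det g|}\,[\tfrac12(R-2\Lambda)-\tfrac12 g^{\mu\nu}\partial_\mu\varphi\,\partial_\nu\varphi]$). *)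

theory Defs
  imports "HOL-Analysis.Analysis"
begin

text \<open>Points are vectors x :: real^'n; the coordinate x^i is x$i.
  A metric is a field of symmetric matrices g :: real^'n \<Rightarrow> real^'n^'n,
  with components g_{ij}(x) = g x $ i $ j.\<close>

definition partial :: "'n::finite \<Rightarrow> (real^'n \<Rightarrow> real) \<Rightarrow> real^'n \<Rightarrow> real" where
  "partial i f x = deriv (\<lambda>t. f (x + t *\<^sub>R axis i 1)) 0"

definition ginv :: "(real^'n \<Rightarrow> real^'n^'n) \<Rightarrow> real^'n \<Rightarrow> 'n::finite \<Rightarrow> 'n \<Rightarrow> real" where
  "ginv g x i j = matrix_inv (g x) $ i $ j"

definition christoffel ::
  "(real^'n \<Rightarrow> real^'n^'n) \<Rightarrow> 'n::finite \<Rightarrow> 'n \<Rightarrow> 'n \<Rightarrow> real^'n \<Rightarrow> real" where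
  "christoffel g k i j x = (1/2) * (\<Sum>l\<in>UNIV. ginv g x k l *
     (partial i (\<lambda>y. g y $ l $ j) x + partial j (\<lambda>y. g y $ l $ i) x
      - partial l (\<lambda>y. g y $ i $ j) x))"

text \<open>Riemann tensor R^r_{s m n} (MTW / Landau-Lifshitz convention):
  R^r_{smn} = d_m Gamma^r_{ns} - d_n Gamma^r_{ms} + Gamma^r_{ml} Gamma^l_{ns} - Gamma^r_{nl} Gamma^l_{ms}.\<close>
definition riemann ::
  "(real^'n \<Rightarrow> real^'n^'n) \<Rightarrow> 'n::finite \<Rightarrow> 'n \<Rightarrow> 'n \<Rightarrow> 'n \<Rightarrow> real^'n \<Rightarrow> real" where
  "riemann g r s m n x =
     partial m (\<lambda>y. christoffel g r n s y) x - partial n (\<lambda>y. christoffel g r m s y) x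
     + (\<Sum>l\<in>UNIV. christoffel g r m l x * christoffel g l n s x)
     - (\<Sum>l\<in>UNIV. christoffel g r n l x * christoffel g l m s x)"

definition ricci :: "(real^'n \<Rightarrow> real^'n^'n) \<Rightarrow> 'n::finite \<Rightarrow> 'n \<Rightarrow> real^'n \<Rightarrow> real" where
  "ricci g s n x = (\<Sum>r\<in>UNIV. riemann g r s r n x)"

definition scalar_curv :: "(real^'n::finite \<Rightarrow> real^'n^'n) \<Rightarrow> real^'n \<Rightarrow> real" where
  "scalar_curv g x = (\<Sum>s\<in>UNIV. \<Sum>n\<in>UNIV. ginv g x s n * ricci g s n x)"

definition einstein :: "(real^'n \<Rightarrow> real^'n^'n) \<Rightarrow> 'n::finite \<Rightarrow> 'n \<Rightarrow> real^'n \<Rightarrow> real" where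
  "einstein g m n x = ricci g m n x - (1/2) * scalar_curv g x * g x $ m $ n"

definition scalar_T ::
  "(real^'n \<Rightarrow> real^'n^'n) \<Rightarrow> (real^'n \<Rightarrow> real) \<Rightarrow> 'n::finite \<Rightarrow> 'n \<Rightarrow> real^'n \<Rightarrow> real" where
  "scalar_T g \<phi> m n x = partial m \<phi> x * partial n \<phi> x
     - (1/2) * g x $ m $ n *
       (\<Sum>a\<in>UNIV. \<Sum>b\<in>UNIV. ginv g x a b * partial a \<phi> x * partial b \<phi> x)"

definition box :: "(real^'n::finite \<Rightarrow> real^'n^'n) \<Rightarrow> (real^'n \<Rightarrow> real) \<Rightarrow> real^'n \<Rightarrow> real" where
  "box g \<phi> x = (1 / sqrt \<bar>det (g x)\<bar>) *
     (\<Sum>m\<in>UNIV. partial m (\<lambda>y. sqrt \<bar>det (g y)\<bar> *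
        (\<Sum>n\<in>UNIV. ginv g y m n * partial n \<phi> y)) x)"

definition sol_theta :: "real \<Rightarrow> real \<Rightarrow> real" where
  "sol_theta \<Lambda> x8 = sqrt (2 * \<Lambda>) * x8"

definition sol_a :: "real \<Rightarrow> real \<Rightarrow> real \<Rightarrow> real \<Rightarrow> real \<Rightarrow> real" where
  "sol_a \<Lambda> \<epsilon> a0 x4 x8 =
     a0 * exp (\<epsilon> * (1/3) * sqrt (\<Lambda>/2) * x4) * ((sin (sol_theta \<Lambda> x8))^2) powr (1/12)"

definition sol_b :: "real \<Rightarrow> real \<Rightarrow> real \<Rightarrow> real \<Rightarrow> real \<Rightarrow> real" where
  "sol_b \<Lambda> \<epsilon> b0 x4 x8 =
     b0 * exp (- \<epsilon> * (1/3) * sqrt (\<Lambda>/2) * x4) * ((sin (sol_theta \<Lambda> x8))^2) powr (1/12)"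

definition sol_phi :: "real \<Rightarrow> real \<Rightarrow> real \<Rightarrow> real \<Rightarrow> real" where
  "sol_phi \<Lambda> \<sigma> x4 x8 =
     \<sigma> * (1/2) * sqrt (5/6) * ln ((tan (sol_theta \<Lambda> x8 / 2))^2)"

text \<open>The metric ds^2 = a^2 (dx1^2+dx2^2+dx3^2) - dx4^2 - b^2 (dx5^2+dx6^2+dx7^2) + dx8^2.
  The index type 8 has the eight distinct elements 1,...,8 (8 = 0 mod 8).\<close>
definition sol_metric :: "real \<Rightarrow> real \<Rightarrow> real \<Rightarrow> real \<Rightarrow> real^8 \<Rightarrow> real^8^8" where
  "sol_metric \<Lambda> \<epsilon> a0 b0 x = (\<chi> i j. if i \<noteq> j then 0
     else if i \<in> {1,2,3} then (sol_a \<Lambda> \<epsilon> a0 (x$4) (x$8))^2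
     else if i = 4 then -1
     else if i \<in> {5,6,7} then - ((sol_b \<Lambda> \<epsilon> b0 (x$4) (x$8))^2)
     else if i = 8 then 1 else 0)"

definition sol_domain :: "real \<Rightarrow> (real^8) set" where
  "sol_domain \<Lambda> = {x. sin (sol_theta \<Lambda> (x$8)) \<noteq> 0}"

definition common_period :: "real \<Rightarrow> real \<Rightarrow> real \<Rightarrow> real \<Rightarrow> real \<Rightarrow> real \<Rightarrow> bool" where
  "common_period \<Lambda> \<epsilon> \<sigma> a0 b0 q \<longleftrightarrow>
     (\<forall>x4 x8. sin (sol_theta \<Lambda> x8) \<noteq> 0 \<longrightarrow>
        sin (sol_theta \<Lambda> (x8 + q)) \<noteq> 0 \<and>
        sol_a \<Lambda> \<epsilon> a0 x4 (x8 + q) = sol_a \<Lambda> \<epsilon> a0 x4 x8 \<and>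
        sol_b \<Lambda> \<epsilon> b0 x4 (x8 + q) = sol_b \<Lambda> \<epsilon> b0 x4 x8 \<and>
        sol_phi \<Lambda> \<sigma> x4 (x8 + q) = sol_phi \<Lambda> \<sigma> x4 x8)"

end

theory Submission
  imports Defs
begin

lemma U8: "(UNIV::8 set) = {1,2,3,4,5,6,7,8}"
proof -
  have c: "card {1,2,3,4,5,6,7,8::8} = 8" by simp
  have "card (UNIV::8 set) = 8" by simp
  then show ?thesis using c
    by (metis card_subset_eq finite subset_UNIV)
qed

lemma sum8: "(\<Sum>i\<in>(UNIV::8 set). f i) = f 1 + f 2 + f 3 + f 4 + f 5 + f 6 + f 7 + f 8"
  unfolding U8 by (simp add: add.assoc)

lemma prod8: "(\<Prod>i\<in>(UNIV::8 set). f i) = f 1 * f 2 * f 3 * f 4 * f 5 * f 6 * f 7 * f 8"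
  unfolding U8 by (simp add: mult.assoc)

lemma matrix_inv_eq: fixes A B :: "real^'n^'n"
  assumes "A ** B = mat 1" "B ** A = mat 1" shows "matrix_inv A = B"
proof -
  have ex: "\<exists>A'. A ** A' = mat 1 \<and> A' ** A = mat 1" using assms by blast
  let ?C = "matrix_inv A"
  have C: "A ** ?C = mat 1 \<and> ?C ** A = mat 1" unfolding matrix_inv_def using someI_ex[OF ex] .
  hence "?C = ?C ** (A ** B)" using assms by (simp add: matrix_mul_rid)
  also have "\<dots> = (?C ** A) ** B" by (simp add: matrix_mul_assoc)
  also have "\<dots> = B" using C by (simp add: matrix_mul_lid)
  finally show ?thesis .
qed

lemma deriv_shift0:
  assumes "(F has_real_derivative D) (at c)"
  shows "deriv (\<lambda>t. F (c + t)) 0 = D"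
proof -
  have "((\<lambda>t. F (t + c)) has_real_derivative D) (at 0)"
    using assms DERIV_shift[of F D 0 c] by simp
  hence "((\<lambda>t. F (c + t)) has_real_derivative D) (at 0)" by (simp add: add.commute)
  thus ?thesis by (rule DERIV_imp_deriv)
qed

lemma partial_tz:
  fixes F :: "real \<Rightarrow> real \<Rightarrow> real" and x :: "real^8"
  assumes "((\<lambda>t. F t (x$8)) has_real_derivative Ft) (at (x$4))"
    and "((\<lambda>z. F (x$4) z) has_real_derivative Fz) (at (x$8))"
  shows "partial i (\<lambda>y. F (y$4) (y$8)) x = (if i = 4 then Ft else if i = 8 then Fz else 0)"
proof -
  have ax: "\<And>j. (x + t *\<^sub>R axis i 1) $ j = x $ j + (if j = i then t else 0)" for t
    by (simp add: axis_def)
  show ?thesis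
  proof (cases "i = 4")
    case True
    then show ?thesis unfolding partial_def ax using deriv_shift0[OF assms(1)] by simp
  next
    case f4: False
    show ?thesis
    proof (cases "i = 8")
      case True
      then show ?thesis unfolding partial_def ax using deriv_shift0[OF assms(2)] by simp
    next
      case False
      then show ?thesis unfolding partial_def ax using f4
        by (simp add: DERIV_imp_deriv)
    qed
  qed
qed

lemma partial_local:
  fixes f h :: "real^'n::finite \<Rightarrow> real"
  assumes "open U" "x \<in> U" "\<And>y. y \<in> U \<Longrightarrow> f y = h y"
  shows "partial i f x = partial i h x"
  unfolding partial_def
proof (rule deriv_cong_ev)
  let ?S = "(\<lambda>t::real. x + t *\<^sub>R axis i 1) -` U"
  have "open ?S"
    by (rule open_vimage[OF assms(1)]) (intro continuous_intros)
  moreover have "0 \<in> ?S" using assms(2) by simp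
  ultimately show "\<forall>\<^sub>F t in nhds 0. f (x + t *\<^sub>R axis i 1) = h (x + t *\<^sub>R axis i 1)"
    unfolding eventually_nhds using assms(3) by blast
qed simp


definition dl :: "'a \<Rightarrow> 'a \<Rightarrow> real" where "dl a b = (if a = b then 1 else 0)"

locale sol =
  fixes \<Lambda> \<epsilon> a0 b0 \<sigma> :: real
  assumes Lpos: "\<Lambda> > 0" and a0: "a0 > 0" and b0: "b0 > 0"
    and eps: "\<epsilon> \<in> {1, -1}" and sig: "\<sigma> \<in> {1, -1}"
begin

definition q where "q = sqrt (\<Lambda>/2)"
definition e where "e = \<epsilon> * q / 3"
definition Cz where "Cz z = cos (2*q*z) / sin (2*q*z)"
definition S where "S z = (sin (2*q*z) ^ 2) powr (1/6)"
definition AA where "AA t z = (sol_a \<Lambda> \<epsilon> a0 t z)^2"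
definition BB where "BB t z = (sol_b \<Lambda> \<epsilon> b0 t z)^2"

lemma q_pos: "q > 0" using Lpos by (simp add: q_def)
lemma L_q: "\<Lambda> = 2 * q^2" using Lpos by (simp add: q_def)
lemma sqrt2L: "sqrt (2*\<Lambda>) = 2*q"
proof -
  have "2*\<Lambda> = (2*q)^2" using L_q by (simp add: power2_eq_square)
  hence "sqrt (2*\<Lambda>) = sqrt ((2*q)^2)" by simp
  also have "\<dots> = \<bar>2*q\<bar>" by (rule real_sqrt_abs)
  finally show ?thesis using q_pos by simp
qed
lemma eps2: "\<epsilon>^2 = 1" using eps by auto
lemma e2: "e^2 = q^2/9" using eps2 by (simp add: e_def power_mult_distrib power_divide)

lemma theta: "sol_theta \<Lambda> z = 2*q*z" by (simp add: sol_theta_def sqrt2L)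

lemma powr_sq: "((x::real) powr (1/12))^2 = x powr (1/6)"
  by (simp add: power2_eq_square powr_add[symmetric])

lemma exp_sq: "(exp (u::real))^2 = exp (2*u)"
  by (simp add: power2_eq_square exp_add[symmetric])

lemma AA_eq: "AA t z = a0^2 * exp (2*e*t) * S z"
proof -
  have "2 * (\<epsilon> * (1/3) * sqrt (\<Lambda>/2) * t) = 2*e*t" by (simp add: e_def q_def)
  thus ?thesis unfolding AA_def sol_a_def S_def theta power_mult_distrib powr_sq exp_sq
    by simp
qed

lemma BB_eq: "BB t z = b0^2 * exp (-(2*e*t)) * S z"
proof -
  have "2 * (- \<epsilon> * (1/3) * sqrt (\<Lambda>/2) * t) = -(2*e*t)" by (simp add: e_def q_def)
  thus ?thesis unfolding BB_def sol_b_def S_def theta power_mult_distrib powr_sq exp_sq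
    by simp
qed

lemma S_pos: "sin (2*q*z) \<noteq> 0 \<Longrightarrow> S z > 0" by (simp add: S_def)
lemma AA_pos: "sin (2*q*z) \<noteq> 0 \<Longrightarrow> AA t z > 0" using S_pos a0 by (simp add: AA_eq)
lemma BB_pos: "sin (2*q*z) \<noteq> 0 \<Longrightarrow> BB t z > 0" using S_pos b0 by (simp add: BB_eq)

lemma S_dz: assumes "sin (2*q*z) \<noteq> 0"
  shows "(S has_real_derivative (2*q/3) * Cz z * S z) (at z)"
proof -
  have g: "((\<lambda>z. sin (2*q*z) ^ 2) has_real_derivative 2 * sin (2*q*z) * (cos (2*q*z) * (2*q))) (at z)"
    by (auto intro!: derivative_eq_intros)
  have pos: "sin (2*q*z) ^ 2 > 0" using assms by simp
  have d: "(S has_real_derivative (1/6) * (sin (2*q*z) ^ 2) powr (1/6 - of_nat 1) * (2 * sin (2*q*z) * (cos (2*q*z) * (2*q)))) (at z)"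
    unfolding S_def by (rule DERIV_fun_powr[OF g pos])
  have h: "(1/6 - of_nat 1::real) = 1/6 - 1" by simp
  have p: "(sin (2*q*z) ^ 2) powr (1/6 - of_nat 1) = S z / sin (2*q*z) ^ 2"
    unfolding h powr_diff S_def using pos by simp
  have eq: "(1/6) * (sin (2*q*z) ^ 2) powr (1/6 - of_nat 1) * (2 * sin (2*q*z) * (cos (2*q*z) * (2*q)))
      = (2*q/3) * Cz z * S z"
    unfolding p Cz_def using assms by (simp add: field_simps power2_eq_square)
  show ?thesis using d unfolding eq .
qed

lemma cot_aux: "(u::real) \<noteq> 0 \<Longrightarrow> ((- u * k) * u - v * (v * k)) / (u * u) = - k * (1 + (v / u) ^ 2)"
  by (simp add: field_simps power2_eq_square)

lemma Cz_dz: assumes "sin (2*q*z) \<noteq> 0"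
  shows "(Cz has_real_derivative -2*q*(1 + Cz z ^2)) (at z)"
proof -
  have "((\<lambda>z. cos (2*q*z) / sin (2*q*z)) has_real_derivative
      ((- sin (2*q*z) * (2*q)) * sin (2*q*z) - cos (2*q*z) * (cos (2*q*z) * (2*q))) / (sin (2*q*z) * sin (2*q*z))) (at z)"
    using assms by (auto intro!: derivative_eq_intros)
  moreover have "((- sin (2*q*z) * (2*q)) * sin (2*q*z) - cos (2*q*z) * (cos (2*q*z) * (2*q))) / (sin (2*q*z) * sin (2*q*z))
     = -2*q*(1 + Cz z ^2)"
    using cot_aux[OF assms, of "2*q" "cos (2*q*z)"] unfolding Cz_def by simp
  ultimately show ?thesis unfolding Cz_def[abs_def] by simp
qed

end

context sol begin

lemma AA_dt: "D = 2*e*AA t z \<Longrightarrow> ((\<lambda>t. AA t z) has_real_derivative D) (at t)"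
  unfolding AA_eq by (auto intro!: derivative_eq_intros)
lemma BB_dt: "D = -2*e*BB t z \<Longrightarrow> ((\<lambda>t. BB t z) has_real_derivative D) (at t)"
  unfolding BB_eq by (auto intro!: derivative_eq_intros)
lemma AA_dz: "sin (2*q*z) \<noteq> 0 \<Longrightarrow> D = (2*q/3) * Cz z * AA t z \<Longrightarrow> ((\<lambda>z. AA t z) has_real_derivative D) (at z)"
  unfolding AA_eq by (auto intro!: derivative_eq_intros S_dz)
lemma BB_dz: "sin (2*q*z) \<noteq> 0 \<Longrightarrow> D = (2*q/3) * Cz z * BB t z \<Longrightarrow> ((\<lambda>z. BB t z) has_real_derivative D) (at z)"
  unfolding BB_eq by (auto intro!: derivative_eq_intros S_dz)
lemma Cz_dz': "sin (2*q*z) \<noteq> 0 \<Longrightarrow> D = -2*q*(1 + Cz z ^2) \<Longrightarrow> (Cz has_real_derivative D) (at z)"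
  using Cz_dz by simp

definition iA :: "8 \<Rightarrow> real" where "iA k = (if k \<in> {1,2,3} then 1 else 0)"
definition iB :: "8 \<Rightarrow> real" where "iB k = (if k \<in> {5,6,7} then 1 else 0)"

definition dd where "dd k t z = iA k * AA t z - dl k 4 - iB k * BB t z + dl k 8"
definition Dt where "Dt k t z = iA k * (2*e*AA t z) + iB k * (2*e*BB t z)"
definition Dz where "Dz k t z = iA k * ((2*q/3) * Cz z * AA t z) - iB k * ((2*q/3) * Cz z * BB t z)"
definition Dtt where "Dtt k t z = iA k * (4*e^2*AA t z) - iB k * (4*e^2*BB t z)"
definition Dtz where "Dtz k t z = iA k * ((4*e*q/3) * Cz z * AA t z) + iB k * ((4*e*q/3) * Cz z * BB t z)"
definition Dzz where "Dzz k t z = iA k * ((2*q/3) * (-2*q*(1 + Cz z^2) * AA t z + Cz z * ((2*q/3) * Cz z * AA t z)))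
    - iB k * ((2*q/3) * (-2*q*(1 + Cz z^2) * BB t z + Cz z * ((2*q/3) * Cz z * BB t z)))"

definition PD :: "8 \<Rightarrow> 8 \<Rightarrow> real \<Rightarrow> real \<Rightarrow> real" where
  "PD i k t z = dl i 4 * Dt k t z + dl i 8 * Dz k t z"
definition PD2 :: "8 \<Rightarrow> 8 \<Rightarrow> 8 \<Rightarrow> real \<Rightarrow> real \<Rightarrow> real" where
  "PD2 m i k t z = dl m 4 * (dl i 4 * Dtt k t z + dl i 8 * Dtz k t z)
     + dl m 8 * (dl i 4 * Dtz k t z + dl i 8 * Dzz k t z)"

lemma dd_dt: "((\<lambda>t. dd k t z) has_real_derivative Dt k t z) (at t)"
  unfolding dd_def Dt_def by (auto intro!: derivative_eq_intros AA_dt BB_dt simp: algebra_simps)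
lemma dd_dz: "sin (2*q*z) \<noteq> 0 \<Longrightarrow> ((\<lambda>z. dd k t z) has_real_derivative Dz k t z) (at z)"
  unfolding dd_def Dz_def by (auto intro!: derivative_eq_intros AA_dz BB_dz simp: algebra_simps)
lemma Dt_dt: "((\<lambda>t. Dt k t z) has_real_derivative Dtt k t z) (at t)"
  unfolding Dt_def Dtt_def by (auto intro!: derivative_eq_intros AA_dt BB_dt simp: power2_eq_square)
lemma Dt_dz: "sin (2*q*z) \<noteq> 0 \<Longrightarrow> ((\<lambda>z. Dt k t z) has_real_derivative Dtz k t z) (at z)"
  unfolding Dt_def Dtz_def by (auto intro!: derivative_eq_intros AA_dz BB_dz simp: algebra_simps)
lemma Dz_dt: "((\<lambda>t. Dz k t z) has_real_derivative Dtz k t z) (at t)"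
  unfolding Dz_def Dtz_def by (auto intro!: derivative_eq_intros AA_dt BB_dt simp: algebra_simps)
lemma Dz_dz: "sin (2*q*z) \<noteq> 0 \<Longrightarrow> ((\<lambda>z. Dz k t z) has_real_derivative Dzz k t z) (at z)"
  unfolding Dz_def Dzz_def by (rule derivative_eq_intros AA_dz BB_dz Cz_dz' refl | assumption)+ (simp add: algebra_simps power2_eq_square)

lemma PD_dt: "((\<lambda>t. PD i k t z) has_real_derivative PD2 4 i k t z) (at t)"
  unfolding PD_def PD2_def by (auto intro!: derivative_eq_intros Dt_dt Dz_dt simp: dl_def)
lemma PD_dz: "sin (2*q*z) \<noteq> 0 \<Longrightarrow> ((\<lambda>z. PD i k t z) has_real_derivative PD2 8 i k t z) (at z)"
  unfolding PD_def PD2_def by (auto intro!: derivative_eq_intros Dt_dz Dz_dz simp: dl_def)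

end

context sol begin

abbreviation "g \<equiv> sol_metric \<Lambda> \<epsilon> a0 b0"
abbreviation "U \<equiv> sol_domain \<Lambda>"

lemma U_eq: "U = {x. sin (2*q*(x$8)) \<noteq> 0}" by (simp add: sol_domain_def theta)

lemma open_U: "open U"
proof -
  have "U = (\<lambda>x::real^8. sin (2*q*(x$8))) -` (- {0})" by (auto simp: U_eq)
  moreover have "open ((\<lambda>x::real^8. sin (2*q*(x$8))) -` (- {0}))"
    by (rule open_vimage) (auto intro!: continuous_intros)
  ultimately show ?thesis by simp
qed

lemma k8: "k = 1 \<or> k = 2 \<or> k = 3 \<or> k = 4 \<or> k = 5 \<or> k = 6 \<or> k = 7 \<or> k = (8::8)"
proof -
  have "k \<in> (UNIV::8 set)" by simp
  thus ?thesis unfolding U8 by auto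
qed

lemma dd_cases: "dd k t z = (if k \<in> {1,2,3} then AA t z else if k = 4 then -1
   else if k \<in> {5,6,7} then - BB t z else if k = 8 then 1 else 0)"
  using k8[of k] by (elim disjE) (simp_all add: dd_def iA_def iB_def dl_def)

lemma g_eq: "g x $ i $ j = dl i j * dd i (x$4) (x$8)"
  unfolding sol_metric_def dd_cases AA_def BB_def by (simp add: dl_def)

lemma dd_nz: "x \<in> U \<Longrightarrow> dd k (x$4) (x$8) \<noteq> 0"
  using k8[of k] AA_pos[of "x$8" "x$4"] BB_pos[of "x$8" "x$4"]
  by (elim disjE) (auto simp: U_eq dd_cases)

lemma sum_single: "(\<And>k. k \<noteq> i \<Longrightarrow> f k = 0) \<Longrightarrow> (\<Sum>k\<in>(UNIV::'a::finite set). f k) = f i"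
  by (subst sum.remove[of UNIV i]) (auto intro: sum.neutral)

lemma ginv_eq: assumes "x \<in> U" shows "ginv g x i j = dl i j / dd i (x$4) (x$8)"
proof -
  let ?B = "(\<chi> i j. dl i j / dd i (x$4) (x$8)) :: real^8^8"
  have nz: "\<And>k. dd k (x$4) (x$8) \<noteq> 0" using dd_nz[OF assms] .
  have "(g x ** ?B) $ i $ j = mat 1 $ i $ j" for i j
  proof -
    have "(g x ** ?B) $ i $ j = (\<Sum>k\<in>UNIV. g x $ i $ k * ?B $ k $ j)"
      by (simp add: matrix_matrix_mult_def)
    also have "\<dots> = g x $ i $ i * ?B $ i $ j"
      by (rule sum_single) (simp add: g_eq dl_def)
    also have "\<dots> = mat 1 $ i $ j" using nz by (simp add: g_eq dl_def mat_def)
    finally show ?thesis .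
  qed
  hence "g x ** ?B = mat 1" by (simp add: vec_eq_iff)
  moreover have "(?B ** g x) $ i $ j = mat 1 $ i $ j" for i j
  proof -
    have "(?B ** g x) $ i $ j = (\<Sum>k\<in>UNIV. ?B $ i $ k * g x $ k $ j)"
      by (simp add: matrix_matrix_mult_def)
    also have "\<dots> = ?B $ i $ i * g x $ i $ j"
      by (rule sum_single) (simp add: g_eq dl_def)
    also have "\<dots> = mat 1 $ i $ j" using nz by (simp add: g_eq dl_def mat_def)
    finally show ?thesis .
  qed
  hence "?B ** g x = mat 1" by (simp add: vec_eq_iff)
  ultimately have "matrix_inv (g x) = ?B" by (rule matrix_inv_eq)
  thus ?thesis by (simp add: ginv_def)
qed

end

context sol begin

definition NN where "NN k i j t z = dl k j * PD i k t z + dl k i * PD j k t z - dl i j * PD k i t z"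
definition Gam where "Gam k i j t z = NN k i j t z / (2 * dd k t z)"
definition NN2 where "NN2 m k i j t z = dl k j * PD2 m i k t z + dl k i * PD2 m j k t z - dl i j * PD2 m k i t z"
definition GamD where "GamD m k i j t z = (NN2 m k i j t z * dd k t z - NN k i j t z * PD m k t z) / (2 * (dd k t z)^2)"

lemma dl_simps[simp]: "dl (4::8) 4 = 1" "dl (8::8) 8 = 1" "dl (4::8) 8 = 0" "dl (8::8) 4 = 0"
  by (simp_all add: dl_def)

lemma PD_4: "PD 4 k t z = Dt k t z" and PD_8: "PD 8 k t z = Dz k t z"
  by (simp_all add: PD_def)

lemma partial_dd: assumes "sin (2*q*(x$8)) \<noteq> 0"
  shows "partial i (\<lambda>y. c * dd k (y$4) (y$8)) x = c * PD i k (x$4) (x$8)"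
proof -
  have "partial i (\<lambda>y. c * dd k (y$4) (y$8)) x = (if i = 4 then c * Dt k (x$4) (x$8) else if i = 8 then c * Dz k (x$4) (x$8) else 0)"
    by (rule partial_tz) (auto intro!: derivative_eq_intros dd_dt dd_dz assms)
  thus ?thesis by (simp add: PD_def dl_def)
qed

lemma christoffel_eq: assumes "x \<in> U"
  shows "christoffel g k i j x = Gam k i j (x$4) (x$8)"
proof -
  have s: "sin (2*q*(x$8)) \<noteq> 0" using assms by (simp add: U_eq)
  have p: "\<And>i l j. partial i (\<lambda>y. g y $ l $ j) x = dl l j * PD i l (x$4) (x$8)"
    unfolding g_eq by (rule partial_dd[OF s])
  have "christoffel g k i j x = (1/2) * (\<Sum>l\<in>UNIV. dl k l / dd k (x$4) (x$8) *
      (dl l j * PD i l (x$4) (x$8) + dl l i * PD j l (x$4) (x$8) - dl i j * PD l i (x$4) (x$8)))"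
    unfolding christoffel_def p ginv_eq[OF assms] ..
  also have "\<dots> = (1/2) * (1 / dd k (x$4) (x$8) *
      (dl k j * PD i k (x$4) (x$8) + dl k i * PD j k (x$4) (x$8) - dl i j * PD k i (x$4) (x$8)))"
    by (subst sum_single[of k]) (auto simp: dl_def)
  also have "\<dots> = Gam k i j (x$4) (x$8)"
    using dd_nz[OF assms] by (simp add: Gam_def NN_def)
  finally show ?thesis .
qed

definition Lt where "Lt k = iA k * e - iB k * e"
definition Lz where "Lz k z = (iA k + iB k) * (q/3) * Cz z"
definition Lzd where "Lzd k z = (iA k + iB k) * (q/3) * (-2*q*(1 + Cz z^2))"

definition Gc where "Gc k i j t z = dl k j * (dl i 4 * Lt k + dl i 8 * Lz k z)
   + dl k i * (dl j 4 * Lt k + dl j 8 * Lz k z)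
   - dl i j * (dl k 4 * (- Dt i t z / 2) + dl k 8 * (Dz i t z / 2))"
definition GDc where "GDc m k i j t z = dl k j * (dl i 8 * dl m 8 * Lzd k z)
   + dl k i * (dl j 8 * dl m 8 * Lzd k z)
   - dl i j * (dl k 4 * (- PD2 m 4 i t z / 2) + dl k 8 * (PD2 m 8 i t z / 2))"

lemma Gam_Gc: assumes "dd k t z \<noteq> 0" shows "Gam k i j t z = Gc k i j t z"
  using k8[of k] assms
  apply (elim disjE)
  apply (simp_all add: Gam_def Gc_def NN_def PD_def Lt_def Lz_def dd_def Dt_def Dz_def iA_def iB_def)
  apply (simp_all add: dl_def field_simps)
  done

lemma christoffel_Gc: assumes "x \<in> U" shows "christoffel g k i j x = Gc k i j (x$4) (x$8)"
  using christoffel_eq[OF assms] Gam_Gc dd_nz[OF assms] by simp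

lemma Lz_dz: "sin (2*q*z) \<noteq> 0 \<Longrightarrow> ((\<lambda>z. Lz k z) has_real_derivative Lzd k z) (at z)"
  unfolding Lz_def Lzd_def by (intro DERIV_cmult Cz_dz)

lemma Dt_dt': "D = PD2 4 4 k t z \<Longrightarrow> ((\<lambda>t. Dt k t z) has_real_derivative D) (at t)"
  using Dt_dt by (simp add: PD2_def)
lemma Dz_dt': "D = PD2 4 8 k t z \<Longrightarrow> ((\<lambda>t. Dz k t z) has_real_derivative D) (at t)"
  using Dz_dt by (simp add: PD2_def)
lemma Dt_dz': "sin (2*q*z) \<noteq> 0 \<Longrightarrow> D = PD2 8 4 k t z \<Longrightarrow> ((\<lambda>z. Dt k t z) has_real_derivative D) (at z)"
  using Dt_dz by (simp add: PD2_def)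
lemma Dz_dz': "sin (2*q*z) \<noteq> 0 \<Longrightarrow> D = PD2 8 8 k t z \<Longrightarrow> ((\<lambda>z. Dz k t z) has_real_derivative D) (at z)"
  using Dz_dz by (simp add: PD2_def)
lemma Lz_dz': "sin (2*q*z) \<noteq> 0 \<Longrightarrow> D = Lzd k z \<Longrightarrow> ((\<lambda>z. Lz k z) has_real_derivative D) (at z)"
  using Lz_dz by simp

lemma Gc_dt: "((\<lambda>t. Gc k i j t z) has_real_derivative GDc 4 k i j t z) (at t)"
  unfolding Gc_def by (auto intro!: derivative_eq_intros Dt_dt' Dz_dt' simp: GDc_def)

lemma Gc_dz: assumes "sin (2*q*z) \<noteq> 0"
  shows "((\<lambda>z. Gc k i j t z) has_real_derivative GDc 8 k i j t z) (at z)"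
  unfolding Gc_def using assms by (auto intro!: derivative_eq_intros Dt_dz' Dz_dz' Lz_dz' simp: GDc_def)

lemma GDc_other: "m \<noteq> 4 \<Longrightarrow> m \<noteq> 8 \<Longrightarrow> GDc m k i j t z = 0"
  by (simp add: GDc_def PD2_def dl_def)

lemma partial_christoffel: assumes "x \<in> U"
  shows "partial m (\<lambda>y. christoffel g r n s y) x = GDc m r n s (x$4) (x$8)"
proof -
  have "partial m (\<lambda>y. christoffel g r n s y) x = partial m (\<lambda>y. Gc r n s (y$4) (y$8)) x"
    by (rule partial_local[OF open_U assms]) (rule christoffel_Gc)
  also have "\<dots> = (if m = 4 then GDc 4 r n s (x$4) (x$8) else if m = 8 then GDc 8 r n s (x$4) (x$8) else 0)"
    using assms by (intro partial_tz Gc_dt Gc_dz) (auto simp: U_eq)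
  also have "\<dots> = GDc m r n s (x$4) (x$8)"
    using GDc_other by auto
  finally show ?thesis .
qed

lemma riemann_eq: assumes "x \<in> U"
  shows "riemann g r s m n x = GDc m r n s (x$4) (x$8) - GDc n r m s (x$4) (x$8)
    + (\<Sum>l\<in>UNIV. Gc r m l (x$4) (x$8) * Gc l n s (x$4) (x$8))
    - (\<Sum>l\<in>UNIV. Gc r n l (x$4) (x$8) * Gc l m s (x$4) (x$8))"
  unfolding riemann_def partial_christoffel[OF assms] christoffel_Gc[OF assms] ..

end

context sol begin

lemma eps_cases: "\<epsilon> = 1 \<or> \<epsilon> = -1" using eps by auto

lemma e_cases: "e = q/3 \<or> e = -q/3" using eps by (auto simp: e_def)

definition Ric where "Ric m n t z = (if m = n then (if m = 8 then 4*q^2 + 10/3*q^2*(Cz z)^2 else 2*q^2/3 * dd m t z) else 0)"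

lemma Gc_if: "Gc k i j t z = (if k = j then (if i = 4 then Lt k else if i = 8 then Lz k z else 0) else 0)
  + (if k = i then (if j = 4 then Lt k else if j = 8 then Lz k z else 0) else 0)
  - (if i = j then (if k = 4 then - Dt i t z / 2 else if k = 8 then Dz i t z / 2 else 0) else 0)"
  by (simp add: Gc_def dl_def)
lemma GDc_if: "GDc m k i j t z = (if k = j \<and> i = 8 \<and> m = 8 then Lzd k z else 0)
  + (if k = i \<and> j = 8 \<and> m = 8 then Lzd k z else 0)
  - (if i = j then (if k = 4 then - PD2 m 4 i t z / 2 else if k = 8 then PD2 m 8 i t z / 2 else 0) else 0)"
  by (simp add: GDc_def dl_def)
lemma PD2_if: "PD2 m i k t z = (if m = 4 then (if i = 4 then Dtt k t z else if i = 8 then Dtz k t z else 0)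
   else if m = 8 then (if i = 4 then Dtz k t z else if i = 8 then Dzz k t z else 0) else 0)"
  by (simp add: PD2_def dl_def)
lemma Lt_if: "Lt k = (if k \<in> {1,2,3} then e else if k \<in> {5,6,7} then -e else 0)"
  by (auto simp: Lt_def iA_def iB_def)
lemma Lz_if: "Lz k z = (if k \<in> {1,2,3} \<or> k \<in> {5,6,7} then (q/3) * Cz z else 0)"
  by (auto simp: Lz_def iA_def iB_def)
lemma Lzd_if: "Lzd k z = (if k \<in> {1,2,3} \<or> k \<in> {5,6,7} then (q/3) * (-2*q*(1 + Cz z^2)) else 0)"
  by (auto simp: Lzd_def iA_def iB_def)
lemma Dt_if: "Dt k t z = (if k \<in> {1,2,3} then 2*e*AA t z else if k \<in> {5,6,7} then 2*e*BB t z else 0)"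
  by (auto simp: Dt_def iA_def iB_def)
lemma Dz_if: "Dz k t z = (if k \<in> {1,2,3} then (2*q/3) * Cz z * AA t z else if k \<in> {5,6,7} then - ((2*q/3) * Cz z * BB t z) else 0)"
  by (auto simp: Dz_def iA_def iB_def)
lemma Dtt_if: "Dtt k t z = (if k \<in> {1,2,3} then 4*e^2*AA t z else if k \<in> {5,6,7} then - (4*e^2*BB t z) else 0)"
  by (auto simp: Dtt_def iA_def iB_def)
lemma Dtz_if: "Dtz k t z = (if k \<in> {1,2,3} then (4*e*q/3) * Cz z * AA t z else if k \<in> {5,6,7} then (4*e*q/3) * Cz z * BB t z else 0)"
  by (auto simp: Dtz_def iA_def iB_def)
lemma Dzz_if: "Dzz k t z = (if k \<in> {1,2,3} then (2*q/3) * (-2*q*(1 + Cz z^2) * AA t z + Cz z * ((2*q/3) * Cz z * AA t z))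
   else if k \<in> {5,6,7} then - ((2*q/3) * (-2*q*(1 + Cz z^2) * BB t z + Cz z * ((2*q/3) * Cz z * BB t z))) else 0)"
  by (auto simp: Dzz_def iA_def iB_def)

lemmas unf = Ric_def sum8 Gc_if GDc_if PD2_if Lt_if Lz_if Lzd_if Dt_if Dz_if Dtt_if Dtz_if Dzz_if dd_cases

lemma n8: "(((1::8) = 2) = False)" "(((1::8) = 3) = False)" "(((1::8) = 4) = False)" "(((1::8) = 5) = False)" "(((1::8) = 6) = False)" "(((1::8) = 7) = False)" "(((1::8) = 8) = False)" "(((2::8) = 1) = False)" "(((2::8) = 3) = False)" "(((2::8) = 4) = False)" "(((2::8) = 5) = False)" "(((2::8) = 6) = False)" "(((2::8) = 7) = False)" "(((2::8) = 8) = False)" "(((3::8) = 1) = False)" "(((3::8) = 2) = False)" "(((3::8) = 4) = False)" "(((3::8) = 5) = False)" "(((3::8) = 6) = False)" "(((3::8) = 7) = False)" "(((3::8) = 8) = False)" "(((4::8) = 1) = False)" "(((4::8) = 2) = False)" "(((4::8) = 3) = False)" "(((4::8) = 5) = False)" "(((4::8) = 6) = False)" "(((4::8) = 7) = False)" "(((4::8) = 8) = False)" "(((5::8) = 1) = False)" "(((5::8) = 2) = False)" "(((5::8) = 3) = False)" "(((5::8) = 4) = False)" "(((5::8) = 6) = False)" "(((5::8) = 7) = False)" "(((5::8) = 8) = False)" "(((6::8) = 1) = False)" "(((6::8) = 2) = False)" "(((6::8) = 3) = False)" "(((6::8) = 4) = False)" "(((6::8) = 5) = False)" "(((6::8) =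 7) = False)" "(((6::8) = 8) = False)" "(((7::8) = 1) = False)" "(((7::8) = 2) = False)" "(((7::8) = 3) = False)" "(((7::8) = 4) = False)" "(((7::8) = 5) = False)" "(((7::8) = 6) = False)" "(((7::8) = 8) = False)" "(((8::8) = 1) = False)" "(((8::8) = 2) = False)" "(((8::8) = 3) = False)" "(((8::8) = 4) = False)" "(((8::8) = 5) = False)" "(((8::8) = 6) = False)" "(((8::8) = 7) = False)"
  by simp_all

lemmas SO = unf n8 insert_iff empty_iff simp_thms if_True if_False mult_zero_left mult_zero_right
     add_0_left add_0_right diff_0 diff_0_right minus_zero mult_1_left mult_1_right div_0 minus_minus

lemma c11: "(\<Sum>r\<in>UNIV. GDc r r 1 1 t z - GDc 1 r r 1 t z
    + (\<Sum>l\<in>UNIV. Gc r r l t z * Gc l 1 1 t z)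
    - (\<Sum>l\<in>UNIV. Gc r 1 l t z * Gc l r 1 t z)) = Ric 1 1 t z"
  by (simp only: SO; (simp add: field_simps power2_eq_square)?; insert e2; algebra)
lemma c12: "(\<Sum>r\<in>UNIV. GDc r r 2 1 t z - GDc 2 r r 1 t z
    + (\<Sum>l\<in>UNIV. Gc r r l t z * Gc l 2 1 t z)
    - (\<Sum>l\<in>UNIV. Gc r 2 l t z * Gc l r 1 t z)) = Ric 1 2 t z"
  by (simp only: SO; (simp add: field_simps power2_eq_square)?; insert e2; algebra)
lemma c13: "(\<Sum>r\<in>UNIV. GDc r r 3 1 t z - GDc 3 r r 1 t z
    + (\<Sum>l\<in>UNIV. Gc r r l t z * Gc l 3 1 t z)
    - (\<Sum>l\<in>UNIV. Gc r 3 l t z * Gc l r 1 t z)) = Ric 1 3 t z"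
  by (simp only: SO; (simp add: field_simps power2_eq_square)?; insert e2; algebra)
lemma c14: "(\<Sum>r\<in>UNIV. GDc r r 4 1 t z - GDc 4 r r 1 t z
    + (\<Sum>l\<in>UNIV. Gc r r l t z * Gc l 4 1 t z)
    - (\<Sum>l\<in>UNIV. Gc r 4 l t z * Gc l r 1 t z)) = Ric 1 4 t z"
  by (simp only: SO; (simp add: field_simps power2_eq_square)?; insert e2; algebra)
lemma c15: "(\<Sum>r\<in>UNIV. GDc r r 5 1 t z - GDc 5 r r 1 t z
    + (\<Sum>l\<in>UNIV. Gc r r l t z * Gc l 5 1 t z)
    - (\<Sum>l\<in>UNIV. Gc r 5 l t z * Gc l r 1 t z)) = Ric 1 5 t z"
  by (simp only: SO; (simp add: field_simps power2_eq_square)?; insert e2; algebra)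
lemma c16: "(\<Sum>r\<in>UNIV. GDc r r 6 1 t z - GDc 6 r r 1 t z
    + (\<Sum>l\<in>UNIV. Gc r r l t z * Gc l 6 1 t z)
    - (\<Sum>l\<in>UNIV. Gc r 6 l t z * Gc l r 1 t z)) = Ric 1 6 t z"
  by (simp only: SO; (simp add: field_simps power2_eq_square)?; insert e2; algebra)
lemma c17: "(\<Sum>r\<in>UNIV. GDc r r 7 1 t z - GDc 7 r r 1 t z
    + (\<Sum>l\<in>UNIV. Gc r r l t z * Gc l 7 1 t z)
    - (\<Sum>l\<in>UNIV. Gc r 7 l t z * Gc l r 1 t z)) = Ric 1 7 t z"
  by (simp only: SO; (simp add: field_simps power2_eq_square)?; insert e2; algebra)
lemma c18: "(\<Sum>r\<in>UNIV. GDc r r 8 1 t z - GDc 8 r r 1 t z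
    + (\<Sum>l\<in>UNIV. Gc r r l t z * Gc l 8 1 t z)
    - (\<Sum>l\<in>UNIV. Gc r 8 l t z * Gc l r 1 t z)) = Ric 1 8 t z"
  by (simp only: SO; (simp add: field_simps power2_eq_square)?; insert e2; algebra)
lemma c21: "(\<Sum>r\<in>UNIV. GDc r r 1 2 t z - GDc 1 r r 2 t z
    + (\<Sum>l\<in>UNIV. Gc r r l t z * Gc l 1 2 t z)
    - (\<Sum>l\<in>UNIV. Gc r 1 l t z * Gc l r 2 t z)) = Ric 2 1 t z"
  by (simp only: SO; (simp add: field_simps power2_eq_square)?; insert e2; algebra)
lemma c22: "(\<Sum>r\<in>UNIV. GDc r r 2 2 t z - GDc 2 r r 2 t z
    + (\<Sum>l\<in>UNIV. Gc r r l t z * Gc l 2 2 t z)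
    - (\<Sum>l\<in>UNIV. Gc r 2 l t z * Gc l r 2 t z)) = Ric 2 2 t z"
  by (simp only: SO; (simp add: field_simps power2_eq_square)?; insert e2; algebra)
lemma c23: "(\<Sum>r\<in>UNIV. GDc r r 3 2 t z - GDc 3 r r 2 t z
    + (\<Sum>l\<in>UNIV. Gc r r l t z * Gc l 3 2 t z)
    - (\<Sum>l\<in>UNIV. Gc r 3 l t z * Gc l r 2 t z)) = Ric 2 3 t z"
  by (simp only: SO; (simp add: field_simps power2_eq_square)?; insert e2; algebra)
lemma c24: "(\<Sum>r\<in>UNIV. GDc r r 4 2 t z - GDc 4 r r 2 t z
    + (\<Sum>l\<in>UNIV. Gc r r l t z * Gc l 4 2 t z)
    - (\<Sum>l\<in>UNIV. Gc r 4 l t z * Gc l r 2 t z)) = Ric 2 4 t z"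
  by (simp only: SO; (simp add: field_simps power2_eq_square)?; insert e2; algebra)
lemma c25: "(\<Sum>r\<in>UNIV. GDc r r 5 2 t z - GDc 5 r r 2 t z
    + (\<Sum>l\<in>UNIV. Gc r r l t z * Gc l 5 2 t z)
    - (\<Sum>l\<in>UNIV. Gc r 5 l t z * Gc l r 2 t z)) = Ric 2 5 t z"
  by (simp only: SO; (simp add: field_simps power2_eq_square)?; insert e2; algebra)
lemma c26: "(\<Sum>r\<in>UNIV. GDc r r 6 2 t z - GDc 6 r r 2 t z
    + (\<Sum>l\<in>UNIV. Gc r r l t z * Gc l 6 2 t z)
    - (\<Sum>l\<in>UNIV. Gc r 6 l t z * Gc l r 2 t z)) = Ric 2 6 t z"
  by (simp only: SO; (simp add: field_simps power2_eq_square)?; insert e2; algebra)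
lemma c27: "(\<Sum>r\<in>UNIV. GDc r r 7 2 t z - GDc 7 r r 2 t z
    + (\<Sum>l\<in>UNIV. Gc r r l t z * Gc l 7 2 t z)
    - (\<Sum>l\<in>UNIV. Gc r 7 l t z * Gc l r 2 t z)) = Ric 2 7 t z"
  by (simp only: SO; (simp add: field_simps power2_eq_square)?; insert e2; algebra)
lemma c28: "(\<Sum>r\<in>UNIV. GDc r r 8 2 t z - GDc 8 r r 2 t z
    + (\<Sum>l\<in>UNIV. Gc r r l t z * Gc l 8 2 t z)
    - (\<Sum>l\<in>UNIV. Gc r 8 l t z * Gc l r 2 t z)) = Ric 2 8 t z"
  by (simp only: SO; (simp add: field_simps power2_eq_square)?; insert e2; algebra)
lemma c31: "(\<Sum>r\<in>UNIV. GDc r r 1 3 t z - GDc 1 r r 3 t z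
    + (\<Sum>l\<in>UNIV. Gc r r l t z * Gc l 1 3 t z)
    - (\<Sum>l\<in>UNIV. Gc r 1 l t z * Gc l r 3 t z)) = Ric 3 1 t z"
  by (simp only: SO; (simp add: field_simps power2_eq_square)?; insert e2; algebra)
lemma c32: "(\<Sum>r\<in>UNIV. GDc r r 2 3 t z - GDc 2 r r 3 t z
    + (\<Sum>l\<in>UNIV. Gc r r l t z * Gc l 2 3 t z)
    - (\<Sum>l\<in>UNIV. Gc r 2 l t z * Gc l r 3 t z)) = Ric 3 2 t z"
  by (simp only: SO; (simp add: field_simps power2_eq_square)?; insert e2; algebra)
lemma c33: "(\<Sum>r\<in>UNIV. GDc r r 3 3 t z - GDc 3 r r 3 t z
    + (\<Sum>l\<in>UNIV. Gc r r l t z * Gc l 3 3 t z)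
    - (\<Sum>l\<in>UNIV. Gc r 3 l t z * Gc l r 3 t z)) = Ric 3 3 t z"
  by (simp only: SO; (simp add: field_simps power2_eq_square)?; insert e2; algebra)
lemma c34: "(\<Sum>r\<in>UNIV. GDc r r 4 3 t z - GDc 4 r r 3 t z
    + (\<Sum>l\<in>UNIV. Gc r r l t z * Gc l 4 3 t z)
    - (\<Sum>l\<in>UNIV. Gc r 4 l t z * Gc l r 3 t z)) = Ric 3 4 t z"
  by (simp only: SO; (simp add: field_simps power2_eq_square)?; insert e2; algebra)
lemma c35: "(\<Sum>r\<in>UNIV. GDc r r 5 3 t z - GDc 5 r r 3 t z
    + (\<Sum>l\<in>UNIV. Gc r r l t z * Gc l 5 3 t z)
    - (\<Sum>l\<in>UNIV. Gc r 5 l t z * Gc l r 3 t z)) = Ric 3 5 t z"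
  by (simp only: SO; (simp add: field_simps power2_eq_square)?; insert e2; algebra)
lemma c36: "(\<Sum>r\<in>UNIV. GDc r r 6 3 t z - GDc 6 r r 3 t z
    + (\<Sum>l\<in>UNIV. Gc r r l t z * Gc l 6 3 t z)
    - (\<Sum>l\<in>UNIV. Gc r 6 l t z * Gc l r 3 t z)) = Ric 3 6 t z"
  by (simp only: SO; (simp add: field_simps power2_eq_square)?; insert e2; algebra)
lemma c37: "(\<Sum>r\<in>UNIV. GDc r r 7 3 t z - GDc 7 r r 3 t z
    + (\<Sum>l\<in>UNIV. Gc r r l t z * Gc l 7 3 t z)
    - (\<Sum>l\<in>UNIV. Gc r 7 l t z * Gc l r 3 t z)) = Ric 3 7 t z"
  by (simp only: SO; (simp add: field_simps power2_eq_square)?; insert e2; algebra)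
lemma c38: "(\<Sum>r\<in>UNIV. GDc r r 8 3 t z - GDc 8 r r 3 t z
    + (\<Sum>l\<in>UNIV. Gc r r l t z * Gc l 8 3 t z)
    - (\<Sum>l\<in>UNIV. Gc r 8 l t z * Gc l r 3 t z)) = Ric 3 8 t z"
  by (simp only: SO; (simp add: field_simps power2_eq_square)?; insert e2; algebra)
lemma c41: "(\<Sum>r\<in>UNIV. GDc r r 1 4 t z - GDc 1 r r 4 t z
    + (\<Sum>l\<in>UNIV. Gc r r l t z * Gc l 1 4 t z)
    - (\<Sum>l\<in>UNIV. Gc r 1 l t z * Gc l r 4 t z)) = Ric 4 1 t z"
  by (simp only: SO; (simp add: field_simps power2_eq_square)?; insert e2; algebra)
lemma c42: "(\<Sum>r\<in>UNIV. GDc r r 2 4 t z - GDc 2 r r 4 t z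
    + (\<Sum>l\<in>UNIV. Gc r r l t z * Gc l 2 4 t z)
    - (\<Sum>l\<in>UNIV. Gc r 2 l t z * Gc l r 4 t z)) = Ric 4 2 t z"
  by (simp only: SO; (simp add: field_simps power2_eq_square)?; insert e2; algebra)
lemma c43: "(\<Sum>r\<in>UNIV. GDc r r 3 4 t z - GDc 3 r r 4 t z
    + (\<Sum>l\<in>UNIV. Gc r r l t z * Gc l 3 4 t z)
    - (\<Sum>l\<in>UNIV. Gc r 3 l t z * Gc l r 4 t z)) = Ric 4 3 t z"
  by (simp only: SO; (simp add: field_simps power2_eq_square)?; insert e2; algebra)
lemma c44: "(\<Sum>r\<in>UNIV. GDc r r 4 4 t z - GDc 4 r r 4 t z
    + (\<Sum>l\<in>UNIV. Gc r r l t z * Gc l 4 4 t z)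
    - (\<Sum>l\<in>UNIV. Gc r 4 l t z * Gc l r 4 t z)) = Ric 4 4 t z"
  by (simp only: SO; (simp add: field_simps power2_eq_square)?; insert e2; algebra)
lemma c45: "(\<Sum>r\<in>UNIV. GDc r r 5 4 t z - GDc 5 r r 4 t z
    + (\<Sum>l\<in>UNIV. Gc r r l t z * Gc l 5 4 t z)
    - (\<Sum>l\<in>UNIV. Gc r 5 l t z * Gc l r 4 t z)) = Ric 4 5 t z"
  by (simp only: SO; (simp add: field_simps power2_eq_square)?; insert e2; algebra)
lemma c46: "(\<Sum>r\<in>UNIV. GDc r r 6 4 t z - GDc 6 r r 4 t z
    + (\<Sum>l\<in>UNIV. Gc r r l t z * Gc l 6 4 t z)
    - (\<Sum>l\<in>UNIV. Gc r 6 l t z * Gc l r 4 t z)) = Ric 4 6 t z"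
  by (simp only: SO; (simp add: field_simps power2_eq_square)?; insert e2; algebra)
lemma c47: "(\<Sum>r\<in>UNIV. GDc r r 7 4 t z - GDc 7 r r 4 t z
    + (\<Sum>l\<in>UNIV. Gc r r l t z * Gc l 7 4 t z)
    - (\<Sum>l\<in>UNIV. Gc r 7 l t z * Gc l r 4 t z)) = Ric 4 7 t z"
  by (simp only: SO; (simp add: field_simps power2_eq_square)?; insert e2; algebra)
lemma c48: "(\<Sum>r\<in>UNIV. GDc r r 8 4 t z - GDc 8 r r 4 t z
    + (\<Sum>l\<in>UNIV. Gc r r l t z * Gc l 8 4 t z)
    - (\<Sum>l\<in>UNIV. Gc r 8 l t z * Gc l r 4 t z)) = Ric 4 8 t z"
  by (simp only: SO; (simp add: field_simps power2_eq_square)?; insert e2; algebra)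
lemma c51: "(\<Sum>r\<in>UNIV. GDc r r 1 5 t z - GDc 1 r r 5 t z
    + (\<Sum>l\<in>UNIV. Gc r r l t z * Gc l 1 5 t z)
    - (\<Sum>l\<in>UNIV. Gc r 1 l t z * Gc l r 5 t z)) = Ric 5 1 t z"
  by (simp only: SO; (simp add: field_simps power2_eq_square)?; insert e2; algebra)
lemma c52: "(\<Sum>r\<in>UNIV. GDc r r 2 5 t z - GDc 2 r r 5 t z
    + (\<Sum>l\<in>UNIV. Gc r r l t z * Gc l 2 5 t z)
    - (\<Sum>l\<in>UNIV. Gc r 2 l t z * Gc l r 5 t z)) = Ric 5 2 t z"
  by (simp only: SO; (simp add: field_simps power2_eq_square)?; insert e2; algebra)
lemma c53: "(\<Sum>r\<in>UNIV. GDc r r 3 5 t z - GDc 3 r r 5 t z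
    + (\<Sum>l\<in>UNIV. Gc r r l t z * Gc l 3 5 t z)
    - (\<Sum>l\<in>UNIV. Gc r 3 l t z * Gc l r 5 t z)) = Ric 5 3 t z"
  by (simp only: SO; (simp add: field_simps power2_eq_square)?; insert e2; algebra)
lemma c54: "(\<Sum>r\<in>UNIV. GDc r r 4 5 t z - GDc 4 r r 5 t z
    + (\<Sum>l\<in>UNIV. Gc r r l t z * Gc l 4 5 t z)
    - (\<Sum>l\<in>UNIV. Gc r 4 l t z * Gc l r 5 t z)) = Ric 5 4 t z"
  by (simp only: SO; (simp add: field_simps power2_eq_square)?; insert e2; algebra)
lemma c55: "(\<Sum>r\<in>UNIV. GDc r r 5 5 t z - GDc 5 r r 5 t z
    + (\<Sum>l\<in>UNIV. Gc r r l t z * Gc l 5 5 t z)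
    - (\<Sum>l\<in>UNIV. Gc r 5 l t z * Gc l r 5 t z)) = Ric 5 5 t z"
  by (simp only: SO; (simp add: field_simps power2_eq_square)?; insert e2; algebra)
lemma c56: "(\<Sum>r\<in>UNIV. GDc r r 6 5 t z - GDc 6 r r 5 t z
    + (\<Sum>l\<in>UNIV. Gc r r l t z * Gc l 6 5 t z)
    - (\<Sum>l\<in>UNIV. Gc r 6 l t z * Gc l r 5 t z)) = Ric 5 6 t z"
  by (simp only: SO; (simp add: field_simps power2_eq_square)?; insert e2; algebra)
lemma c57: "(\<Sum>r\<in>UNIV. GDc r r 7 5 t z - GDc 7 r r 5 t z
    + (\<Sum>l\<in>UNIV. Gc r r l t z * Gc l 7 5 t z)
    - (\<Sum>l\<in>UNIV. Gc r 7 l t z * Gc l r 5 t z)) = Ric 5 7 t z"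
  by (simp only: SO; (simp add: field_simps power2_eq_square)?; insert e2; algebra)
lemma c58: "(\<Sum>r\<in>UNIV. GDc r r 8 5 t z - GDc 8 r r 5 t z
    + (\<Sum>l\<in>UNIV. Gc r r l t z * Gc l 8 5 t z)
    - (\<Sum>l\<in>UNIV. Gc r 8 l t z * Gc l r 5 t z)) = Ric 5 8 t z"
  by (simp only: SO; (simp add: field_simps power2_eq_square)?; insert e2; algebra)
lemma c61: "(\<Sum>r\<in>UNIV. GDc r r 1 6 t z - GDc 1 r r 6 t z
    + (\<Sum>l\<in>UNIV. Gc r r l t z * Gc l 1 6 t z)
    - (\<Sum>l\<in>UNIV. Gc r 1 l t z * Gc l r 6 t z)) = Ric 6 1 t z"
  by (simp only: SO; (simp add: field_simps power2_eq_square)?; insert e2; algebra)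
lemma c62: "(\<Sum>r\<in>UNIV. GDc r r 2 6 t z - GDc 2 r r 6 t z
    + (\<Sum>l\<in>UNIV. Gc r r l t z * Gc l 2 6 t z)
    - (\<Sum>l\<in>UNIV. Gc r 2 l t z * Gc l r 6 t z)) = Ric 6 2 t z"
  by (simp only: SO; (simp add: field_simps power2_eq_square)?; insert e2; algebra)
lemma c63: "(\<Sum>r\<in>UNIV. GDc r r 3 6 t z - GDc 3 r r 6 t z
    + (\<Sum>l\<in>UNIV. Gc r r l t z * Gc l 3 6 t z)
    - (\<Sum>l\<in>UNIV. Gc r 3 l t z * Gc l r 6 t z)) = Ric 6 3 t z"
  by (simp only: SO; (simp add: field_simps power2_eq_square)?; insert e2; algebra)
lemma c64: "(\<Sum>r\<in>UNIV. GDc r r 4 6 t z - GDc 4 r r 6 t z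
    + (\<Sum>l\<in>UNIV. Gc r r l t z * Gc l 4 6 t z)
    - (\<Sum>l\<in>UNIV. Gc r 4 l t z * Gc l r 6 t z)) = Ric 6 4 t z"
  by (simp only: SO; (simp add: field_simps power2_eq_square)?; insert e2; algebra)
lemma c65: "(\<Sum>r\<in>UNIV. GDc r r 5 6 t z - GDc 5 r r 6 t z
    + (\<Sum>l\<in>UNIV. Gc r r l t z * Gc l 5 6 t z)
    - (\<Sum>l\<in>UNIV. Gc r 5 l t z * Gc l r 6 t z)) = Ric 6 5 t z"
  by (simp only: SO; (simp add: field_simps power2_eq_square)?; insert e2; algebra)
lemma c66: "(\<Sum>r\<in>UNIV. GDc r r 6 6 t z - GDc 6 r r 6 t z
    + (\<Sum>l\<in>UNIV. Gc r r l t z * Gc l 6 6 t z)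
    - (\<Sum>l\<in>UNIV. Gc r 6 l t z * Gc l r 6 t z)) = Ric 6 6 t z"
  by (simp only: SO; (simp add: field_simps power2_eq_square)?; insert e2; algebra)
lemma c67: "(\<Sum>r\<in>UNIV. GDc r r 7 6 t z - GDc 7 r r 6 t z
    + (\<Sum>l\<in>UNIV. Gc r r l t z * Gc l 7 6 t z)
    - (\<Sum>l\<in>UNIV. Gc r 7 l t z * Gc l r 6 t z)) = Ric 6 7 t z"
  by (simp only: SO; (simp add: field_simps power2_eq_square)?; insert e2; algebra)
lemma c68: "(\<Sum>r\<in>UNIV. GDc r r 8 6 t z - GDc 8 r r 6 t z
    + (\<Sum>l\<in>UNIV. Gc r r l t z * Gc l 8 6 t z)
    - (\<Sum>l\<in>UNIV. Gc r 8 l t z * Gc l r 6 t z)) = Ric 6 8 t z"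
  by (simp only: SO; (simp add: field_simps power2_eq_square)?; insert e2; algebra)
lemma c71: "(\<Sum>r\<in>UNIV. GDc r r 1 7 t z - GDc 1 r r 7 t z
    + (\<Sum>l\<in>UNIV. Gc r r l t z * Gc l 1 7 t z)
    - (\<Sum>l\<in>UNIV. Gc r 1 l t z * Gc l r 7 t z)) = Ric 7 1 t z"
  by (simp only: SO; (simp add: field_simps power2_eq_square)?; insert e2; algebra)
lemma c72: "(\<Sum>r\<in>UNIV. GDc r r 2 7 t z - GDc 2 r r 7 t z
    + (\<Sum>l\<in>UNIV. Gc r r l t z * Gc l 2 7 t z)
    - (\<Sum>l\<in>UNIV. Gc r 2 l t z * Gc l r 7 t z)) = Ric 7 2 t z"
  by (simp only: SO; (simp add: field_simps power2_eq_square)?; insert e2; algebra)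
lemma c73: "(\<Sum>r\<in>UNIV. GDc r r 3 7 t z - GDc 3 r r 7 t z
    + (\<Sum>l\<in>UNIV. Gc r r l t z * Gc l 3 7 t z)
    - (\<Sum>l\<in>UNIV. Gc r 3 l t z * Gc l r 7 t z)) = Ric 7 3 t z"
  by (simp only: SO; (simp add: field_simps power2_eq_square)?; insert e2; algebra)
lemma c74: "(\<Sum>r\<in>UNIV. GDc r r 4 7 t z - GDc 4 r r 7 t z
    + (\<Sum>l\<in>UNIV. Gc r r l t z * Gc l 4 7 t z)
    - (\<Sum>l\<in>UNIV. Gc r 4 l t z * Gc l r 7 t z)) = Ric 7 4 t z"
  by (simp only: SO; (simp add: field_simps power2_eq_square)?; insert e2; algebra)
lemma c75: "(\<Sum>r\<in>UNIV. GDc r r 5 7 t z - GDc 5 r r 7 t z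
    + (\<Sum>l\<in>UNIV. Gc r r l t z * Gc l 5 7 t z)
    - (\<Sum>l\<in>UNIV. Gc r 5 l t z * Gc l r 7 t z)) = Ric 7 5 t z"
  by (simp only: SO; (simp add: field_simps power2_eq_square)?; insert e2; algebra)
lemma c76: "(\<Sum>r\<in>UNIV. GDc r r 6 7 t z - GDc 6 r r 7 t z
    + (\<Sum>l\<in>UNIV. Gc r r l t z * Gc l 6 7 t z)
    - (\<Sum>l\<in>UNIV. Gc r 6 l t z * Gc l r 7 t z)) = Ric 7 6 t z"
  by (simp only: SO; (simp add: field_simps power2_eq_square)?; insert e2; algebra)
lemma c77: "(\<Sum>r\<in>UNIV. GDc r r 7 7 t z - GDc 7 r r 7 t z
    + (\<Sum>l\<in>UNIV. Gc r r l t z * Gc l 7 7 t z)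
    - (\<Sum>l\<in>UNIV. Gc r 7 l t z * Gc l r 7 t z)) = Ric 7 7 t z"
  by (simp only: SO; (simp add: field_simps power2_eq_square)?; insert e2; algebra)
lemma c78: "(\<Sum>r\<in>UNIV. GDc r r 8 7 t z - GDc 8 r r 7 t z
    + (\<Sum>l\<in>UNIV. Gc r r l t z * Gc l 8 7 t z)
    - (\<Sum>l\<in>UNIV. Gc r 8 l t z * Gc l r 7 t z)) = Ric 7 8 t z"
  by (simp only: SO; (simp add: field_simps power2_eq_square)?; insert e2; algebra)
lemma c81: "(\<Sum>r\<in>UNIV. GDc r r 1 8 t z - GDc 1 r r 8 t z
    + (\<Sum>l\<in>UNIV. Gc r r l t z * Gc l 1 8 t z)
    - (\<Sum>l\<in>UNIV. Gc r 1 l t z * Gc l r 8 t z)) = Ric 8 1 t z"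
  by (simp only: SO; (simp add: field_simps power2_eq_square)?; insert e2; algebra)
lemma c82: "(\<Sum>r\<in>UNIV. GDc r r 2 8 t z - GDc 2 r r 8 t z
    + (\<Sum>l\<in>UNIV. Gc r r l t z * Gc l 2 8 t z)
    - (\<Sum>l\<in>UNIV. Gc r 2 l t z * Gc l r 8 t z)) = Ric 8 2 t z"
  by (simp only: SO; (simp add: field_simps power2_eq_square)?; insert e2; algebra)
lemma c83: "(\<Sum>r\<in>UNIV. GDc r r 3 8 t z - GDc 3 r r 8 t z
    + (\<Sum>l\<in>UNIV. Gc r r l t z * Gc l 3 8 t z)
    - (\<Sum>l\<in>UNIV. Gc r 3 l t z * Gc l r 8 t z)) = Ric 8 3 t z"
  by (simp only: SO; (simp add: field_simps power2_eq_square)?; insert e2; algebra)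
lemma c84: "(\<Sum>r\<in>UNIV. GDc r r 4 8 t z - GDc 4 r r 8 t z
    + (\<Sum>l\<in>UNIV. Gc r r l t z * Gc l 4 8 t z)
    - (\<Sum>l\<in>UNIV. Gc r 4 l t z * Gc l r 8 t z)) = Ric 8 4 t z"
  by (simp only: SO; (simp add: field_simps power2_eq_square)?; insert e2; algebra)
lemma c85: "(\<Sum>r\<in>UNIV. GDc r r 5 8 t z - GDc 5 r r 8 t z
    + (\<Sum>l\<in>UNIV. Gc r r l t z * Gc l 5 8 t z)
    - (\<Sum>l\<in>UNIV. Gc r 5 l t z * Gc l r 8 t z)) = Ric 8 5 t z"
  by (simp only: SO; (simp add: field_simps power2_eq_square)?; insert e2; algebra)
lemma c86: "(\<Sum>r\<in>UNIV. GDc r r 6 8 t z - GDc 6 r r 8 t z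
    + (\<Sum>l\<in>UNIV. Gc r r l t z * Gc l 6 8 t z)
    - (\<Sum>l\<in>UNIV. Gc r 6 l t z * Gc l r 8 t z)) = Ric 8 6 t z"
  by (simp only: SO; (simp add: field_simps power2_eq_square)?; insert e2; algebra)
lemma c87: "(\<Sum>r\<in>UNIV. GDc r r 7 8 t z - GDc 7 r r 8 t z
    + (\<Sum>l\<in>UNIV. Gc r r l t z * Gc l 7 8 t z)
    - (\<Sum>l\<in>UNIV. Gc r 7 l t z * Gc l r 8 t z)) = Ric 8 7 t z"
  by (simp only: SO; (simp add: field_simps power2_eq_square)?; insert e2; algebra)
lemma c88: "(\<Sum>r\<in>UNIV. GDc r r 8 8 t z - GDc 8 r r 8 t z
    + (\<Sum>l\<in>UNIV. Gc r r l t z * Gc l 8 8 t z)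
    - (\<Sum>l\<in>UNIV. Gc r 8 l t z * Gc l r 8 t z)) = Ric 8 8 t z"
  by (simp only: SO; (simp add: field_simps power2_eq_square)?; insert e2; algebra)

lemma ricci_alg:
  shows "(\<Sum>r\<in>UNIV. GDc r r n m t z - GDc n r r m t z
    + (\<Sum>l\<in>UNIV. Gc r r l t z * Gc l n m t z)
    - (\<Sum>l\<in>UNIV. Gc r n l t z * Gc l r m t z)) = Ric m n t z"
  using k8[of m] k8[of n]
  by (elim disjE) (simp_all only: c11 c12 c13 c14 c15 c16 c17 c18 c21 c22 c23 c24 c25 c26 c27 c28 c31 c32 c33 c34 c35 c36 c37 c38 c41 c42 c43 c44 c45 c46 c47 c48 c51 c52 c53 c54 c55 c56 c57 c58 c61 c62 c63 c64 c65 c66 c67 c68 c71 c72 c73 c74 c75 c76 c77 c78 c81 c82 c83 c84 c85 c86 c87 c88)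

lemma ricci_val: assumes "x \<in> U" shows "ricci g m n x = Ric m n (x$4) (x$8)"
  unfolding ricci_def riemann_eq[OF assms] using ricci_alg[of n m "x$4" "x$8"] by simp

end

lemma partial_4:
  fixes F :: "real \<Rightarrow> real \<Rightarrow> real" and x :: "real^8"
  assumes "((\<lambda>t. F t (x$8)) has_real_derivative Ft) (at (x$4))"
  shows "partial 4 (\<lambda>y. F (y$4) (y$8)) x = Ft"
proof -
  have ax: "\<And>j. (x + t *\<^sub>R axis 4 1) $ j = x $ j + (if j = 4 then t else 0)" for t
    by (simp add: axis_def)
  show ?thesis unfolding partial_def ax using deriv_shift0[OF assms] by simp
qed

lemma partial_const: "partial i (\<lambda>y::real^'n::finite. c) x = 0"
  unfolding partial_def by (simp add: DERIV_imp_deriv)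

context sol begin

definition P where "P z = 2*\<sigma> * sqrt(5/6)*q / sin (2*q*z)"

lemma sin2_split: "sin (2*q*z) = 2 * sin (q*z) * cos (q*z)"
  using sin_double[of "q*z"] by (simp add: mult.assoc)

lemma phi_fun: "sol_phi \<Lambda> \<sigma> t z = \<sigma>*(1/2) * sqrt(5/6)*ln ((tan (q*z))^2)"
  by (simp add: sol_phi_def theta)

lemma phi_dz: assumes "sin (2*q*z) \<noteq> 0"
  shows "((\<lambda>z. sol_phi \<Lambda> \<sigma> t z) has_real_derivative P z) (at z)"
proof -
  have sc: "sin (q*z) \<noteq> 0" "cos (q*z) \<noteq> 0" using assms sin2_split by auto
  have tpos: "tan (q*z) ^ 2 > 0" using sc by (simp add: tan_def)
  have Pa: "P z = \<sigma> * sqrt (5/6) * q / (sin (q*z) * cos (q*z))"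
    unfolding P_def sin2_split by simp
  show ?thesis unfolding phi_fun Pa using sc tpos
    apply (auto intro!: derivative_eq_intros simp: tan_def field_simps power2_eq_square)
    using sin_cos_squared_add[of "z*q"] by algebra
qed

lemma partial_phi: assumes "x \<in> U"
  shows "partial i (\<lambda>y. sol_phi \<Lambda> \<sigma> (y$4) (y$8)) x = dl i 8 * P (x$8)"
proof -
  have s: "sin (2*q*(x$8)) \<noteq> 0" using assms by (simp add: U_eq)
  have c: "(\<lambda>t. sol_phi \<Lambda> \<sigma> t (x$8)) = (\<lambda>t. sol_phi \<Lambda> \<sigma> 0 (x$8))" by (simp add: phi_fun)
  have "partial i (\<lambda>y. sol_phi \<Lambda> \<sigma> (y$4) (y$8)) x = (if i = 4 then 0 else if i = 8 then P (x$8) else 0)"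
    by (rule partial_tz) (simp_all add: c phi_dz[OF s])
  thus ?thesis by (simp add: dl_def)
qed

lemma P_sq: assumes "sin (2*q*z) \<noteq> 0" shows "(P z)^2 = 10/3 * q^2 * (1 + (Cz z)^2)"
proof -
  have sg: "\<sigma>^2 = 1" using sig by auto
  have "(P z)^2 = 4 * \<sigma>^2 * (5/6) * q^2 / (sin (2*q*z))^2"
    by (simp add: P_def power_mult_distrib power_divide)
  also have "\<dots> = 10/3 * q^2 / (sin (2*q*z))^2" by (simp add: sg)
  also have "\<dots> = 10/3 * q^2 * (1 + (Cz z)^2)"
    using assms unfolding Cz_def power_divide cos_squared_eq by (simp add: field_simps)
  finally show ?thesis .
qed


lemma ell: assumes "x \<in> U"
  shows "(1/2) * partial 4 (\<lambda>y. ln (sol_b \<Lambda> \<epsilon> b0 (y$4) (y$8) / sol_a \<Lambda> \<epsilon> a0 (y$4) (y$8))) x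
     = - \<epsilon> * (1/3) * sqrt (\<Lambda>/2)"
proof -
  have s: "sin (2*q*(x$8)) \<noteq> 0" using assms by (simp add: U_eq)
  define w where "w = (sin (2*q*(x$8)) ^ 2) powr (1/12)"
  have wpos: "w > 0" using s by (simp add: w_def)
  have f: "(\<lambda>t. ln (sol_b \<Lambda> \<epsilon> b0 t (x$8) / sol_a \<Lambda> \<epsilon> a0 t (x$8))) = (\<lambda>t. ln (b0/a0) - 2*e*t)"
  proof
    fix t
    have "sol_b \<Lambda> \<epsilon> b0 t (x$8) / sol_a \<Lambda> \<epsilon> a0 t (x$8) = (b0/a0) * exp (-2*e*t)"
      unfolding sol_a_def sol_b_def theta w_def[symmetric] using wpos a0 b0
      by (simp add: e_def q_def field_simps exp_minus exp_add[symmetric] flip: exp_diff)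
    also have "ln \<dots> = ln (b0/a0) - 2*e*t" by (subst ln_mult) (use a0 b0 in auto)
    finally show "ln (sol_b \<Lambda> \<epsilon> b0 t (x$8) / sol_a \<Lambda> \<epsilon> a0 t (x$8)) = ln (b0/a0) - 2*e*t" by simp
  qed
  have "partial 4 (\<lambda>y. ln (sol_b \<Lambda> \<epsilon> b0 (y$4) (y$8) / sol_a \<Lambda> \<epsilon> a0 (y$4) (y$8))) x = -2*e"
    by (rule partial_4) (auto simp: f intro!: derivative_eq_intros)
  thus ?thesis by (simp add: e_def q_def)
qed

end

context sol begin

lemma det_g: "det (g y) = (AA (y$4) (y$8))^3 * (BB (y$4) (y$8))^3"
proof -
  have "det (g y) = (\<Prod>i\<in>UNIV. g y $ i $ i)"
    by (rule det_diagonal) (simp add: g_eq dl_def)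
  also have "\<dots> = (AA (y$4) (y$8))^3 * (BB (y$4) (y$8))^3"
    by (simp add: prod8 g_eq dl_def dd_cases power3_eq_cube)
  finally show ?thesis .
qed

lemma S6: assumes "sin (2*q*z) \<noteq> 0" shows "(S z)^6 = (sin (2*q*z))^2"
proof -
  have Sp: "S z > 0" using S_pos[OF assms] .
  have "(S z)^6 = S z powr (real 6)" using powr_realpow[OF Sp, of 6] by simp
  also have "\<dots> = (sin (2*q*z) ^ 2) powr (1/6 * real 6)" unfolding S_def powr_powr ..
  also have "\<dots> = (sin (2*q*z))^2" by simp
  finally show ?thesis .
qed

lemma sqrt_det: assumes "y \<in> U"
  shows "sqrt \<bar>det (g y)\<bar> = a0^3 * b0^3 * \<bar>sin (2*q*(y$8))\<bar>"
proof -
  have s: "sin (2*q*(y$8)) \<noteq> 0" using assms by (simp add: U_eq)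
  have ab: "AA (y$4) (y$8) * BB (y$4) (y$8) = a0^2 * b0^2 * (S (y$8))^2"
    by (simp add: AA_eq BB_eq power2_eq_square mult_ac exp_minus field_simps)
  have "det (g y) = (AA (y$4) (y$8) * BB (y$4) (y$8))^3" by (simp add: det_g power_mult_distrib)
  also have "\<dots> = a0^6 * b0^6 * (S (y$8))^6" unfolding ab by (simp add: power_mult_distrib flip: power_mult)
  also have "\<dots> = (a0^3 * b0^3 * sin (2*q*(y$8)))^2" unfolding S6[OF s]
    by (simp add: power_mult_distrib flip: power_mult)
  finally have "sqrt \<bar>det (g y)\<bar> = \<bar>a0^3 * b0^3 * sin (2*q*(y$8))\<bar>" by simp
  thus ?thesis using a0 b0 by (simp add: abs_mult)
qed

lemma inner_eq: assumes "y \<in> U"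
  shows "sqrt \<bar>det (g y)\<bar> * (\<Sum>n\<in>UNIV. ginv g y m n * partial n (\<lambda>y. sol_phi \<Lambda> \<sigma> (y$4) (y$8)) y)
    = dl m 8 * (a0^3 * b0^3 * (2 * \<sigma> * sqrt (5/6) * q)) * (\<bar>sin (2*q*(y$8))\<bar> / sin (2*q*(y$8)))"
proof -
  have "(\<Sum>n\<in>UNIV. ginv g y m n * partial n (\<lambda>y. sol_phi \<Lambda> \<sigma> (y$4) (y$8)) y)
      = ginv g y m m * partial m (\<lambda>y. sol_phi \<Lambda> \<sigma> (y$4) (y$8)) y"
    by (rule sum_single) (simp add: ginv_eq[OF assms] dl_def)
  also have "\<dots> = dl m 8 * P (y$8)"
    by (simp add: ginv_eq[OF assms] partial_phi[OF assms] dl_def dd_cases)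
  finally show ?thesis unfolding sqrt_det[OF assms] P_def by (simp add: field_simps)
qed

lemma box_zero: assumes "x \<in> U" shows "box g (\<lambda>y. sol_phi \<Lambda> \<sigma> (y$4) (y$8)) x = 0"
proof -
  define s0 where "s0 = sin (2*q*(x$8))"
  have s0: "s0 \<noteq> 0" using assms by (simp add: U_eq s0_def)
  define V where "V = {y::real^8. sin (2*q*(y$8)) * s0 > 0}"
  have oV: "open V"
  proof -
    have "V = (\<lambda>y::real^8. sin (2*q*(y$8)) * s0) -` {0<..}" by (auto simp: V_def)
    moreover have "open ((\<lambda>y::real^8. sin (2*q*(y$8)) * s0) -` {0<..})"
      by (rule open_vimage) (auto intro!: continuous_intros)
    ultimately show ?thesis by simp
  qed
  have "s0 * s0 > 0" using s0 by (auto simp add: zero_less_mult_iff linorder_neq_iff)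
  hence xV: "x \<in> V" unfolding V_def s0_def by simp
  have VU: "V \<subseteq> U" by (auto simp: V_def U_eq)
  have sgn: "\<bar>sin (2*q*(y$8))\<bar> / sin (2*q*(y$8)) = sgn s0" if "y \<in> V" for y
  proof -
    have "sin (2*q*(y$8)) * s0 > 0" using that by (simp add: V_def)
    thus ?thesis by (cases "s0 > 0") (auto simp: zero_less_mult_iff abs_if)
  qed
  have "partial m (\<lambda>y. sqrt \<bar>det (g y)\<bar> * (\<Sum>n\<in>UNIV. ginv g y m n * partial n (\<lambda>y. sol_phi \<Lambda> \<sigma> (y$4) (y$8)) y)) x = 0" for m
  proof -
    have "partial m (\<lambda>y. sqrt \<bar>det (g y)\<bar> * (\<Sum>n\<in>UNIV. ginv g y m n * partial n (\<lambda>y. sol_phi \<Lambda> \<sigma> (y$4) (y$8)) y)) x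
      = partial m (\<lambda>y. dl m 8 * (a0^3 * b0^3 * (2 * \<sigma> * sqrt (5/6) * q)) * sgn s0) x"
      by (rule partial_local[OF oV xV]) (use VU in \<open>auto simp: inner_eq sgn\<close>)
    also have "\<dots> = 0" by (rule partial_const)
    finally show ?thesis .
  qed
  thus ?thesis by (simp add: box_def)
qed

lemma p0_eq: "pi * sqrt (2/\<Lambda>) = pi / q"
proof -
  have qs: "q^2 = \<Lambda>/2" using Lpos by (simp add: q_def)
  have "2/\<Lambda> = (1/q)^2" using Lpos by (simp add: power_divide qs)
  hence "sqrt (2/\<Lambda>) = 1/q" using q_pos by simp
  thus ?thesis by simp
qed

lemma theta_shift: "sol_theta \<Lambda> (x8 + p) = sol_theta \<Lambda> x8 + 2*q*p"
  by (simp add: theta algebra_simps)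

lemma period_ok: "common_period \<Lambda> \<epsilon> \<sigma> a0 b0 (pi * sqrt (2/\<Lambda>))"
proof -
  have th: "sol_theta \<Lambda> (x8 + pi * sqrt (2/\<Lambda>)) = sol_theta \<Lambda> x8 + 2*pi" for x8
    unfolding theta_shift p0_eq using q_pos by simp
  have th2: "sol_theta \<Lambda> (x8 + pi * sqrt (2/\<Lambda>)) / 2 = sol_theta \<Lambda> x8 / 2 + pi" for x8
    unfolding th by simp
  show ?thesis unfolding common_period_def
    by (simp add: sol_a_def sol_b_def sol_phi_def th add_divide_distrib)
qed

lemma sin_ne0: assumes "0 < u" "u < 2*pi" "u \<noteq> pi" shows "sin u \<noteq> 0"
proof
  assume "sin u = 0"
  then obtain i :: int where i: "u = of_int i * pi" by (auto simp: sin_zero_iff_int2)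
  have "0 < of_int i * pi" "of_int i * pi < 2 * pi" using assms i by auto
  hence "0 < i" "i < 2" using pi_gt_zero
    by (auto simp: zero_less_mult_iff mult_less_cancel_right2 mult_less_cancel_right)
  hence "i = 1" by simp
  thus False using i assms by simp
qed

lemma period_min: assumes "0 < p" "p < pi * sqrt (2/\<Lambda>)"
  shows "\<not> common_period \<Lambda> \<epsilon> \<sigma> a0 b0 p"
proof
  assume cp: "common_period \<Lambda> \<epsilon> \<sigma> a0 b0 p"
  define d where "d = q * p"
  have d0: "0 < d" "d < pi" using assms q_pos unfolding d_def p0_eq
    by (auto simp: field_simps)
  show False
  proof (cases "d = pi/2")
    case False
    define x8 where "x8 = (pi/2 - d) / q"
    have t0: "sol_theta \<Lambda> x8 = pi - 2*d" using q_pos by (simp add: theta x8_def field_simps)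
    have t1: "sol_theta \<Lambda> (x8 + p) = pi" unfolding theta_shift t0 by (simp add: d_def)
    have "sin (sol_theta \<Lambda> x8) \<noteq> 0" unfolding t0 sin_pi_minus
      using sin_ne0[of "2*d"] d0 False by auto
    with cp have "sin (sol_theta \<Lambda> (x8 + p)) \<noteq> 0" unfolding common_period_def by blast
    thus False unfolding t1 by simp
  next
    case True
    have qp2: "2*q*p = pi" using True by (simp add: d_def)
    define x8 where "x8 = (pi/3) / q"
    have t0: "sol_theta \<Lambda> x8 = 2*pi/3" using q_pos by (simp add: theta x8_def field_simps)
    have t1: "sol_theta \<Lambda> (x8 + p) / 2 = - (pi/6) + pi"
      unfolding theta_shift t0 qp2 by (simp add: field_simps)
    have "sin (sol_theta \<Lambda> x8) \<noteq> 0" unfolding t0 using sin_ne0[of "2*pi/3"] by simp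
    with cp have eq: "sol_phi \<Lambda> \<sigma> 0 (x8 + p) = sol_phi \<Lambda> \<sigma> 0 x8" unfolding common_period_def by blast
    have a: "sol_phi \<Lambda> \<sigma> 0 x8 = \<sigma> * (1/2) * sqrt (5/6) * ln 3"
      unfolding sol_phi_def t0 by (simp add: tan_60)
    have b: "sol_phi \<Lambda> \<sigma> 0 (x8 + p) = \<sigma> * (1/2) * sqrt (5/6) * ln (1/3)"
      unfolding sol_phi_def t1 tan_periodic_pi tan_minus by (simp add: tan_30 power_divide)
    have "ln (1/3::real) = - ln 3" by (simp add: ln_div)
    moreover have "\<sigma> \<noteq> 0" using sig by auto
    moreover have "ln (3::real) > 0" by simp
    ultimately show False using eq a b by simp
  qed
qed

lemma Lhalf: "pi * sqrt (2/\<Lambda>) = 2 * pi \<longleftrightarrow> \<Lambda> = 1/2"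
proof -
  have "pi * sqrt (2/\<Lambda>) = 2 * pi \<longleftrightarrow> sqrt (2/\<Lambda>) = 2" by simp
  also have "\<dots> \<longleftrightarrow> 2/\<Lambda> = 4"
    by (metis real_sqrt_four real_sqrt_eq_iff)
  also have "\<dots> \<longleftrightarrow> \<Lambda> = 1/2" using Lpos by (auto simp: field_simps)
  finally show ?thesis .
qed

end

context sol begin

lemma q_sq: "q^2 = \<Lambda>/2" using Lpos by (simp add: q_def)

lemma qq: "q * (q * y) = \<Lambda>/2 * y" "q * q = \<Lambda>/2"
  using q_sq by (simp_all add: power2_eq_square mult.assoc[symmetric])

lemma scalar_val: assumes "x \<in> U"
  shows "scalar_curv g x = 26/3*q^2 + 10/3*q^2*(Cz (x$8))^2"
proof -
  have s: "sin (2*q*(x$8)) \<noteq> 0" using assms by (simp add: U_eq)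
  have A: "AA (x$4) (x$8) \<noteq> 0" using AA_pos[OF s, of "x$4"] by simp
  have B: "BB (x$4) (x$8) \<noteq> 0" using BB_pos[OF s, of "x$4"] by simp
  have inner: "(\<Sum>n\<in>UNIV. dl s n / dd s (x$4) (x$8) * Ric s n (x$4) (x$8)) = Ric s s (x$4) (x$8) / dd s (x$4) (x$8)" for s
    by (subst sum_single[of s]) (auto simp: dl_def)
  have "scalar_curv g x = (\<Sum>s\<in>UNIV. Ric s s (x$4) (x$8) / dd s (x$4) (x$8))"
    unfolding scalar_curv_def ginv_eq[OF assms] ricci_val[OF assms] inner ..
  also have "\<dots> = 26/3*q^2 + 10/3*q^2*(Cz (x$8))^2"
    using A B by (simp add: sum8 Ric_def dd_cases field_simps)
  finally show ?thesis .
qed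

lemma kin_val: assumes "x \<in> U"
  shows "(\<Sum>a\<in>UNIV. \<Sum>b\<in>UNIV. ginv g x a b * partial a (\<lambda>y. sol_phi \<Lambda> \<sigma> (y$4) (y$8)) x
            * partial b (\<lambda>y. sol_phi \<Lambda> \<sigma> (y$4) (y$8)) x) = (P (x$8))^2"
proof -
  have "(\<Sum>a\<in>UNIV. \<Sum>b\<in>UNIV. ginv g x a b * partial a (\<lambda>y. sol_phi \<Lambda> \<sigma> (y$4) (y$8)) x
            * partial b (\<lambda>y. sol_phi \<Lambda> \<sigma> (y$4) (y$8)) x)
      = (\<Sum>a\<in>UNIV. \<Sum>b\<in>UNIV. dl a b / dd a (x$4) (x$8) * (dl a 8 * P (x$8)) * (dl b 8 * P (x$8)))"
    unfolding ginv_eq[OF assms] partial_phi[OF assms] ..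
  also have "\<dots> = (P (x$8))^2"
    by (simp add: sum8 dl_def dd_cases power2_eq_square)
  finally show ?thesis .
qed

lemma einstein_ok: assumes "x \<in> U"
  shows "einstein g m n x + \<Lambda> * g x $ m $ n = scalar_T g (\<lambda>y. sol_phi \<Lambda> \<sigma> (y$4) (y$8)) m n x"
proof -
  have s: "sin (2*q*(x$8)) \<noteq> 0" using assms by (simp add: U_eq)
  show ?thesis
    unfolding einstein_def scalar_T_def
    unfolding kin_val[OF assms]
    unfolding ricci_val[OF assms] scalar_val[OF assms] g_eq partial_phi[OF assms] P_sq[OF s] Ric_def
    by (cases "m = n"; cases "m = 8") (auto simp: dl_def dd_cases field_simps q_sq qq P_sq[OF s, unfolded power2_eq_square] power2_eq_square)
qed

end


context sol begin

lemma main_loc: "open U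
    \<and> (\<forall>x\<in>U. \<forall>m n. einstein g m n x + \<Lambda> * g x $ m $ n = scalar_T g (\<lambda>x::real^8. sol_phi \<Lambda> \<sigma> (x$4) (x$8)) m n x)
    \<and> (\<forall>x\<in>U. box g (\<lambda>x::real^8. sol_phi \<Lambda> \<sigma> (x$4) (x$8)) x = 0)
    \<and> (\<forall>x\<in>U. (1/2) * partial 4
           (\<lambda>y. ln (sol_b \<Lambda> \<epsilon> b0 (y$4) (y$8) / sol_a \<Lambda> \<epsilon> a0 (y$4) (y$8))) x
         = - \<epsilon> * (1/3) * sqrt (\<Lambda>/2))
    \<and> common_period \<Lambda> \<epsilon> \<sigma> a0 b0 (pi * sqrt (2/\<Lambda>))
    \<and> (\<forall>p. 0 < p \<and> p < pi * sqrt (2/\<Lambda>) \<longrightarrow> \<not> common_period \<Lambda> \<epsilon> \<sigma> a0 b0 p)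
    \<and> (pi * sqrt (2/\<Lambda>) = 2 * pi \<longleftrightarrow> \<Lambda> = 1/2)"
  using open_U einstein_ok box_zero ell period_ok period_min Lhalf by blast

end

theorem mainTheorem1:
  fixes \<Lambda> a0 b0 \<epsilon> \<sigma> :: real
  assumes "\<Lambda> > 0" and "a0 > 0" and "b0 > 0"
    and "\<epsilon> \<in> {1, -1}" and "\<sigma> \<in> {1, -1}"
  defines "g \<equiv> sol_metric \<Lambda> \<epsilon> a0 b0"
    and "\<phi> \<equiv> (\<lambda>x::real^8. sol_phi \<Lambda> \<sigma> (x$4) (x$8))"
    and "U \<equiv> sol_domain \<Lambda>"
  shows "open U
    \<and> (\<forall>x\<in>U. \<forall>m n. einstein g m n x + \<Lambda> * g x $ m $ n = scalar_T g \<phi> m n x)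
    \<and> (\<forall>x\<in>U. box g \<phi> x = 0)
    \<and> (\<forall>x\<in>U. (1/2) * partial 4
           (\<lambda>y. ln (sol_b \<Lambda> \<epsilon> b0 (y$4) (y$8) / sol_a \<Lambda> \<epsilon> a0 (y$4) (y$8))) x
         = - \<epsilon> * (1/3) * sqrt (\<Lambda>/2))
    \<and> common_period \<Lambda> \<epsilon> \<sigma> a0 b0 (pi * sqrt (2/\<Lambda>))
    \<and> (\<forall>q. 0 < q \<and> q < pi * sqrt (2/\<Lambda>) \<longrightarrow> \<not> common_period \<Lambda> \<epsilon> \<sigma> a0 b0 q)
    \<and> (pi * sqrt (2/\<Lambda>) = 2 * pi \<longleftrightarrow> \<Lambda> = 1/2)"
proof -
  have "sol \<Lambda> \<epsilon> a0 b0 \<sigma>" using assms(1-5) by unfold_locales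
  from sol.main_loc[OF this] show ?thesis
    unfolding assms(6) assms(7) assms(8) by blast
qed

end
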